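(* Let $m,n\in\mathbb{N}$ be coprime with $1\le m\le n-1$, and let $\Gamma$ be a $\mathbb{D}_n$-symmetric billiard curve with equivariant parametrization $\gamma$. An $n$-periodic billiard sequence $Z\in\Gamma^{\mathbb{Z}}$ of rotation number $\frac mn$ is $\mathbb{D}_n$-symmetric if and only if it has a lift of the form $$X_i=\frac{A}{2n}+\frac mn i\quad\text{for some }A\in\mathbb{Z}.$$ Every such sequence is a billiard orbit. Two such orbits are geometrically equal if and only if their lifts of this form differ by an integer multiple of $\frac1n$. In particular, $\Gamma$ has exactly two geometrically distinct $n$-periodic $\mathbb{D}_n$-symmetric Birkhoff billiard orbits of rotation number $\frac mn$.
   Context: $\mathbb{D}_n=\langle R,S\rangle$, where $R$ is counterclockwise rotation by $2\pi/n$ and $S$ is the horizontal reflection. $\Gamma$ is a $C^2$ simple closed $\mathbb{D}_n$-invariant curve bounding a strictly convex domain, parametrized counterclockwise by a $1$-periodic $C^2$ immersion $\gamma$ descending to an embedding of $\mathbb{R}/\mathbb{Z}$, with $\gamma(x+1/n)=R\gamma(x)$ and $\gamma(-x)=S\gamma(x)$. A billiard sequence has $Z_i\ne Z_{i+1}$, with lift $X$ ($\gamma(X_i)=Z_i$, $0<X_{i+1}-X_i<1$). A billiard orbit satisfies the reflection law at each point. $Z$ is $\mathbb{D}_n$-symmetric if every $g\in\mathbb{D}_n$ satisfies, for some $k$, $g(Z_i)=Z_{k+i}$ for all $i$ or $g(Z_i)=Z_{k-i}$ for all $i$. Birkhoff means the lift satisfies $X_i\le X_j+l\Rightarrow X_{i+m}\le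 X_{j+m}+l$ for all integers. $Z,Z'$ are geometrically equal if for some $k$, $Z_i=Z'_{k+i}$ for all $i$ or $Z_i=Z'_{k-i}$ for all $i$; otherwise they are geometrically distinct. *)

theory Defs
  imports "HOL-Complex_Analysis.Winding_Numbers"
begin

definition rotR :: "nat \<Rightarrow> complex \<Rightarrow> complex" where
  "rotR n z = cis (2 * pi / real n) * z"

definition reflS :: "complex \<Rightarrow> complex" where
  "reflS z = cnj z"

text \<open>The dihedral group D_n generated by R and S (as a finite group, the
submonoid generated by R and S is the generated group).\<close>
inductive_set dihedral :: "nat \<Rightarrow> (complex \<Rightarrow> complex) set" for n where
  dih_id: "id \<in> dihedral n"
| dih_R: "g \<in> dihedral n \<Longrightarrow> rotR n \<circ> g \<in> dihedral n"
| dih_S: "g \<in> dihedral n \<Longrightarrow> reflS \<circ> g \<in> dihedral n"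

definition strictly_convex_set :: "complex set \<Rightarrow> bool" where
  "strictly_convex_set S \<longleftrightarrow> convex S \<and>
     (\<forall>x\<in>closure S. \<forall>y\<in>closure S. x \<noteq> y \<longrightarrow> open_segment x y \<subseteq> interior S)"

definition C2_function :: "(real \<Rightarrow> complex) \<Rightarrow> bool" where
  "C2_function g \<longleftrightarrow> (\<exists>g' g''. (\<forall>x. (g has_vector_derivative g' x) (at x))
      \<and> (\<forall>x. (g' has_vector_derivative g'' x) (at x)) \<and> continuous_on UNIV g'')"

definition Dn_billiard_param :: "nat \<Rightarrow> (real \<Rightarrow> complex) \<Rightarrow> bool" where
  "Dn_billiard_param n \<gamma> \<longleftrightarrow>
     C2_function \<gamma> \<and>
     (\<forall>x. vector_derivative \<gamma> (at x) \<noteq> 0) \<and>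
     (\<forall>x y. \<gamma> x = \<gamma> y \<longleftrightarrow> x - y \<in> \<int>) \<and>
     strictly_convex_set (inside (range \<gamma>)) \<and>
     (\<forall>p \<in> inside (range \<gamma>). winding_number \<gamma> p = 1) \<and>
     (\<forall>g \<in> dihedral n. g ` range \<gamma> = range \<gamma>) \<and>
     (\<forall>x. \<gamma> (x + 1 / real n) = rotR n (\<gamma> x)) \<and>
     (\<forall>x. \<gamma> (- x) = reflS (\<gamma> x))"

definition is_lift :: "(real \<Rightarrow> complex) \<Rightarrow> (int \<Rightarrow> complex) \<Rightarrow> (int \<Rightarrow> real) \<Rightarrow> bool" where
  "is_lift \<gamma> Z X \<longleftrightarrow> (\<forall>i. \<gamma> (X i) = Z i \<and> 0 < X (i + 1) - X i \<and> X (i + 1) - X i < 1)"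

definition billiard_seq :: "(real \<Rightarrow> complex) \<Rightarrow> (int \<Rightarrow> complex) \<Rightarrow> bool" where
  "billiard_seq \<gamma> Z \<longleftrightarrow> (\<forall>i. Z i \<in> range \<gamma> \<and> Z i \<noteq> Z (i + 1))"

text \<open>Reflection law at Z i: the sum of the unit vectors pointing to the previous and
the next point is orthogonal to the tangent of the curve at Z i.\<close>
definition billiard_orbit :: "(real \<Rightarrow> complex) \<Rightarrow> (int \<Rightarrow> complex) \<Rightarrow> bool" where
  "billiard_orbit \<gamma> Z \<longleftrightarrow> billiard_seq \<gamma> Z \<and>
     (\<forall>i x. \<gamma> x = Z i \<longrightarrow>
        inner ((Z (i - 1) - Z i) / of_real (norm (Z (i - 1) - Z i))
             + (Z (i + 1) - Z i) / of_real (norm (Z (i + 1) - Z i)))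
              (vector_derivative \<gamma> (at x)) = 0)"

definition periodic_seq :: "nat \<Rightarrow> (int \<Rightarrow> complex) \<Rightarrow> bool" where
  "periodic_seq n Z \<longleftrightarrow> (\<forall>i. Z (i + int n) = Z i)"

definition has_rotation_number :: "(real \<Rightarrow> complex) \<Rightarrow> (int \<Rightarrow> complex) \<Rightarrow> real \<Rightarrow> bool" where
  "has_rotation_number \<gamma> Z \<rho> \<longleftrightarrow>
     (\<exists>X. is_lift \<gamma> Z X \<and> (\<lambda>k::nat. X (int k) / real k) \<longlonglongrightarrow> \<rho>)"

definition Dn_symmetric :: "nat \<Rightarrow> (int \<Rightarrow> complex) \<Rightarrow> bool" where
  "Dn_symmetric n Z \<longleftrightarrow> (\<forall>g \<in> dihedral n. \<exists>k::int.
      (\<forall>i. g (Z i) = Z (k + i)) \<or> (\<forall>i. g (Z i) = Z (k - i)))"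

definition birkhoff :: "(real \<Rightarrow> complex) \<Rightarrow> (int \<Rightarrow> complex) \<Rightarrow> bool" where
  "birkhoff \<gamma> Z \<longleftrightarrow> (\<exists>X. is_lift \<gamma> Z X \<and>
     (\<forall>i j l k :: int. X i \<le> X j + l \<longrightarrow> X (i + k) \<le> X (j + k) + l))"

definition geom_equal :: "(int \<Rightarrow> complex) \<Rightarrow> (int \<Rightarrow> complex) \<Rightarrow> bool" where
  "geom_equal Z Z' \<longleftrightarrow> (\<exists>k::int. (\<forall>i. Z i = Z' (k + i)) \<or> (\<forall>i. Z i = Z' (k - i)))"

definition sym_lift :: "nat \<Rightarrow> nat \<Rightarrow> int \<Rightarrow> int \<Rightarrow> real" where
  "sym_lift n m A i = real_of_int A / (2 * real n) + real m / real n * real_of_int i"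

end

theory Submission
  imports Defs
begin

lemma int_const_step:
  fixes f :: "int \<Rightarrow> 'a"
  assumes "\<And>i. f (i + 1) = f i"
  shows "f i = f 0"
proof (induct i rule: int_induct[where k=0])
  case base then show ?case by simp
next
  case (step1 i) then show ?case using assms[of i] by simp
next
  case (step2 i) then show ?case using assms[of "i - 1"] by simp
qed

lemma int_period_mult:
  fixes f :: "int \<Rightarrow> 'a"
  assumes "\<And>i. f (i + p) = f i"
  shows "f (i + j * p) = f i"
proof -
  have "f (i + j * p) = f (i + 0 * p)"
    by (rule int_const_step[where f="\<lambda>j. f (i + j * p)"])
       (metis assms add.assoc distrib_right mult_1)
  then show ?thesis by simp
qed

lemma Ints_step_const:
  fixes f :: "int \<Rightarrow> real"
  assumes "\<And>i. f i \<in> \<int>" "\<And>i. \<bar>f (i + 1) - f i\<bar> < 1"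
  shows "f i = f 0"
proof (rule int_const_step)
  fix i
  have "f (i+1) - f i \<in> \<int>" using assms(1) by (simp add: Ints_diff)
  then obtain z where z: "f (i+1) - f i = of_int z" by (auto elim: Ints_cases)
  with assms(2)[of i] have "\<bar>z\<bar> < 1" by simp
  then have "z = 0" by simp
  with z show "f (i+1) = f i" by simp
qed

lemma cong_sol:
  fixes m n :: nat and b :: int
  assumes "coprime m n"
  shows "\<exists>k::int. int n dvd (int m * k - b)"
proof -
  have "coprime (int m) (int n)" using assms by simp
  then have "gcd (int m) (int n) = 1" by (simp add: coprime_iff_gcd_eq_1)
  then obtain u v where uv: "u * int m + v * int n = 1"
    using bezout_int[of "int m" "int n"] by auto
  have e: "u * int m - 1 = - v * int n" using uv by linarith
  have "int m * (u * b) - b = (u * int m - 1) * b" by (simp add: algebra_simps)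
  also have "\<dots> = int n * (- v * b)" unfolding e by (simp add: algebra_simps)
  finally show ?thesis by (intro exI[of _ "u*b"] dvdI)
qed

lemma dvd_Ints:
  assumes "int n dvd a" "n > 0"
  shows "real_of_int a / real n \<in> \<int>"
proof -
  obtain c where c: "a = int n * c" using assms(1) by (rule dvdE)
  have "real_of_int a / real n = of_int c" unfolding c using assms(2) by simp
  then show ?thesis by simp
qed

lemma Ints_dvd:
  assumes "real_of_int a / real n \<in> \<int>" "n > 0"
  shows "int n dvd a"
proof -
  obtain c where "real_of_int a / real n = of_int c" using assms by (auto elim: Ints_cases)
  then have "real_of_int a = real n * of_int c" using assms by (simp add: field_simps)
  then have "a = int n * c" by (metis of_int_eq_iff of_int_mult of_int_of_nat_eq)
  then show ?thesis by simp
qed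

locale DB =
  fixes n :: nat and \<gamma> :: "real \<Rightarrow> complex"
  assumes param: "Dn_billiard_param n \<gamma>" and npos: "n > 0"
begin

lemmas PP = param[unfolded Dn_billiard_param_def]
lemmas P1 = PP[THEN conjunct2, THEN conjunct2, THEN conjunct1]
lemmas P2 = PP[THEN conjunct2, THEN conjunct2, THEN conjunct2, THEN conjunct2, THEN conjunct2, THEN conjunct2, THEN conjunct1]
lemmas P3 = PP[THEN conjunct2, THEN conjunct2, THEN conjunct2, THEN conjunct2, THEN conjunct2, THEN conjunct2, THEN conjunct2]
lemmas PC2 = PP[THEN conjunct1]

lemma geq: "\<gamma> x = \<gamma> y \<longleftrightarrow> x - y \<in> \<int>"
  using P1 by (elim allE)

lemma gshift: "k \<in> \<int> \<Longrightarrow> \<gamma> (x + k) = \<gamma> x"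
  using geq by simp

lemma grot: "\<gamma> (x + 1 / real n) = rotR n (\<gamma> x)"
  using P2 by (elim allE)

lemma grefl: "\<gamma> (- x) = cnj (\<gamma> x)"
  using P3 unfolding reflS_def by (elim allE)

lemma dihedral_char:
  assumes "g \<in> dihedral n"
  shows "\<exists>a::int. (\<forall>x. g (\<gamma> x) = \<gamma> (x + a / n)) \<or> (\<forall>x. g (\<gamma> x) = \<gamma> (a / n - x))"
  using assms
proof induct
  case dih_id
  then show ?case by (intro exI[of _ 0]) simp
next
  case (dih_R g)
  then obtain a :: int where "(\<forall>x. g (\<gamma> x) = \<gamma> (x + a / n)) \<or> (\<forall>x. g (\<gamma> x) = \<gamma> (a / n - x))" by blast
  then show ?case
  proof
    assume h: "\<forall>x. g (\<gamma> x) = \<gamma> (x + a / n)"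
    have hh: "\<forall>x. (rotR n \<circ> g) (\<gamma> x) = \<gamma> (x + (a+1) / n)"
    proof
      fix x
      have "(rotR n \<circ> g) (\<gamma> x) = rotR n (\<gamma> (x + a / n))" using h[rule_format, of x] by simp
      also have "\<dots> = \<gamma> (x + a / n + 1 / n)" by (rule grot[symmetric])
      also have "\<dots> = \<gamma> (x + (a+1) / n)" by (rule arg_cong[where f=\<gamma>]) (simp add: add_divide_distrib)
      finally show "(rotR n \<circ> g) (\<gamma> x) = \<gamma> (x + (a+1) / n)" .
    qed
    show ?case by (rule exI[of _ "a+1"], rule disjI1, rule hh)
  next
    assume h: "\<forall>x. g (\<gamma> x) = \<gamma> (a / n - x)"
    have hh: "\<forall>x. (rotR n \<circ> g) (\<gamma> x) = \<gamma> ((a+1) / n - x)"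
    proof
      fix x
      have "(rotR n \<circ> g) (\<gamma> x) = rotR n (\<gamma> (a / n - x))" using h[rule_format, of x] by simp
      also have "\<dots> = \<gamma> (a / n - x + 1 / n)" by (rule grot[symmetric])
      also have "\<dots> = \<gamma> ((a+1) / n - x)" by (rule arg_cong[where f=\<gamma>]) (simp add: add_divide_distrib)
      finally show "(rotR n \<circ> g) (\<gamma> x) = \<gamma> ((a+1) / n - x)" .
    qed
    show ?case by (rule exI[of _ "a+1"], rule disjI2, rule hh)
  qed
next
  case (dih_S g)
  then obtain a :: int where "(\<forall>x. g (\<gamma> x) = \<gamma> (x + a / n)) \<or> (\<forall>x. g (\<gamma> x) = \<gamma> (a / n - x))" by blast
  then show ?case
  proof
    assume h: "\<forall>x. g (\<gamma> x) = \<gamma> (x + a / n)"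
    have hh: "\<forall>x. (reflS \<circ> g) (\<gamma> x) = \<gamma> ((-a) / n - x)"
    proof
      fix x
      have "(reflS \<circ> g) (\<gamma> x) = cnj (\<gamma> (x + a/n))" using h[rule_format, of x] by (simp add: reflS_def)
      also have "\<dots> = \<gamma> (-(x + a/n))" by (rule grefl[symmetric])
      also have "\<dots> = \<gamma> ((-a) / n - x)" by (rule arg_cong[where f=\<gamma>]) simp
      finally show "(reflS \<circ> g) (\<gamma> x) = \<gamma> ((-a) / n - x)" .
    qed
    show ?case by (rule exI[of _ "-a"], rule disjI2, rule hh)
  next
    assume h: "\<forall>x. g (\<gamma> x) = \<gamma> (a / n - x)"
    have hh: "\<forall>x. (reflS \<circ> g) (\<gamma> x) = \<gamma> (x + (-a) / n)"
    proof
      fix x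
      have "(reflS \<circ> g) (\<gamma> x) = cnj (\<gamma> (a/n - x))" using h[rule_format, of x] by (simp add: reflS_def)
      also have "\<dots> = \<gamma> (-(a/n - x))" by (rule grefl[symmetric])
      also have "\<dots> = \<gamma> (x + (-a) / n)" by (rule arg_cong[where f=\<gamma>]) simp
      finally show "(reflS \<circ> g) (\<gamma> x) = \<gamma> (x + (-a) / n)" .
    qed
    show ?case by (rule exI[of _ "-a"], rule disjI1, rule hh)
  qed
qed

lemma refl_nat: "\<gamma> (real a / real n - y) = cis (2 * pi / real n) ^ a * cnj (\<gamma> y)"
proof (induct a arbitrary: y)
  case 0
  then show ?case using grefl[of y] by simp
next
  case (Suc a)
  have "\<gamma> (real (Suc a) / real n - y) = \<gamma> ((real a / real n - y) + 1 / real n)"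
    by (rule arg_cong[where f=\<gamma>]) (simp add: add_divide_distrib)
  also have "\<dots> = rotR n (\<gamma> (real a / real n - y))" by (rule grot)
  also have "\<dots> = cis (2 * pi / real n) * (cis (2 * pi / real n) ^ a * cnj (\<gamma> y))"
    unfolding Suc rotR_def ..
  finally show ?case by (simp add: mult.assoc)
qed

lemma refl_int: "\<exists>c. norm c = 1 \<and> (\<forall>y. \<gamma> (real_of_int b / real n - y) = c * cnj (\<gamma> y))"
proof -
  define a where "a = nat (b mod int n)"
  have a: "int a = b mod int n" unfolding a_def using npos by simp
  have "b = (b div int n) * int n + int a" using a by simp
  then have "real_of_int b = real_of_int (b div int n) * real n + real a"
    by (metis of_int_add of_int_mult of_int_of_nat_eq)
  then have e: "\<And>y. real_of_int b / real n - y = (real a / real n - y) + real_of_int (b div int n)"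
    using npos by (simp add: field_simps)
  show ?thesis
    by (rule exI[of _ "cis (2 * pi / real n) ^ a"]) (simp add: e gshift refl_nat norm_power)
qed

lemma inner_alg:
  fixes c w T :: complex
  assumes "c * cnj T = - T"
  shows "inner (c * cnj w + w) T = 0"
proof -
  have i: "\<And>z. inner z T = Re (z * cnj T)" by (simp add: inner_complex_def)
  have "(c * cnj w + w) * cnj T = cnj w * (c * cnj T) + w * cnj T"
    by (simp add: algebra_simps)
  also have "\<dots> = - (cnj w * T) + w * cnj T" unfolding assms by simp
  finally have "(c * cnj w + w) * cnj T = - (cnj w * T) + w * cnj T" .
  then have "Re ((c * cnj w + w) * cnj T) = - Re (cnj w * T) + Re (w * cnj T)" by simp
  also have "\<dots> = 0" by simp
  finally show ?thesis by (simp add: i)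
qed

lemma deriv_rel:
  assumes der: "\<And>x. (\<gamma> has_vector_derivative g' x) (at x)"
    and c: "\<forall>y. \<gamma> (real_of_int b / real n - y) = c * cnj (\<gamma> y)"
    and x: "real_of_int b / real n = 2 * x"
  shows "c * cnj (g' x) = - g' x"
proof -
  have d1: "((\<lambda>y. real_of_int b / real n - y) has_vector_derivative (-1)) (at x)"
    by (auto intro!: derivative_eq_intros)
  have "(\<gamma> has_vector_derivative g' x) (at ((\<lambda>y. real_of_int b / real n - y) x))"
    using der[of x] x by simp
  from vector_diff_chain_at[OF d1 this]
  have "((\<gamma> \<circ> (\<lambda>y. real_of_int b / real n - y)) has_vector_derivative - g' x) (at x)" by simp
  moreover have "\<gamma> \<circ> (\<lambda>y. real_of_int b / real n - y) = (\<lambda>y. c * cnj (\<gamma> y))"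
    using c by (simp add: comp_def)
  ultimately have A: "((\<lambda>y. c * cnj (\<gamma> y)) has_vector_derivative - g' x) (at x)" by simp
  have B: "((\<lambda>y. c * cnj (\<gamma> y)) has_vector_derivative c * cnj (g' x)) (at x)"
    by (intro has_vector_derivative_mult_right has_vector_derivative_cnj der)
  show ?thesis using vector_derivative_unique_at[OF B A] .
qed

end

locale DBm = DB +
  fixes m :: nat
  assumes mpos: "0 < m" and mlt: "m < n" and cop: "coprime m n"
begin

abbreviation "ZZ A \<equiv> (\<lambda>i. \<gamma> (sym_lift n m A i))"

lemma mn_not_Int: "real m / real n \<notin> \<int>"
proof
  assume "real m / real n \<in> \<int>"
  then obtain z where z: "real m / real n = of_int z" by (auto elim: Ints_cases)
  have "0 < real m / real n" "real m / real n < 1" using mpos mlt by auto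
  with z have "0 < z" "z < 1" by auto
  then show False by simp
qed

lemma sl_step: "sym_lift n m A (i + 1) = sym_lift n m A i + real m / real n"
  unfolding sym_lift_def using npos by (simp add: field_simps)

lemma seq_ZZ: "billiard_seq \<gamma> (ZZ A)"
  unfolding billiard_seq_def
proof (intro allI conjI)
  fix i
  show "ZZ A i \<in> range \<gamma>" by simp
  show "ZZ A i \<noteq> ZZ A (i + 1)"
    unfolding sl_step geq using mn_not_Int by simp
qed

lemma orbit_ZZ: "billiard_orbit \<gamma> (ZZ A)"
  unfolding billiard_orbit_def
proof (intro conjI seq_ZZ allI impI)
  fix i x
  assume hx: "\<gamma> x = ZZ A i"
  define x0 where "x0 = sym_lift n m A i"
  have "x - x0 \<in> \<int>" using hx geq unfolding x0_def by simp
  then obtain t where t: "x = x0 + of_int t" by (auto elim!: Ints_cases simp: algebra_simps)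
  define b where "b = A + 2 * int m * i + 2 * int n * t"
  have bx: "real_of_int b / real n = 2 * x"
    unfolding b_def t x0_def sym_lift_def using npos by (simp add: field_simps)
  obtain c where nc: "norm c = 1" and c: "\<forall>y. \<gamma> (real_of_int b / real n - y) = c * cnj (\<gamma> y)"
    using refl_int by blast
  obtain g' g'' where der: "\<And>x. (\<gamma> has_vector_derivative g' x) (at x)"
    using PC2 unfolding C2_function_def by blast
  have vd: "vector_derivative \<gamma> (at x) = g' x" by (rule vector_derivative_at[OF der])
  have T: "c * cnj (g' x) = - g' x" by (rule deriv_rel[OF der c bx])
  have Zp: "ZZ A (i + 1) = \<gamma> (x + real m / real n)"
  proof -
    have "ZZ A (i + 1) = \<gamma> (x + real m / real n + of_int (- t))"
      unfolding sl_step t x0_def by simp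
    also have "\<dots> = \<gamma> (x + real m / real n)" by (rule gshift) simp
    finally show ?thesis .
  qed
  have Zm: "ZZ A (i - 1) = c * cnj (\<gamma> (x + real m / real n))"
  proof -
    have "sym_lift n m A i = sym_lift n m A (i - 1) + real m / real n"
      using sl_step[of A "i - 1"] by simp
    then have "sym_lift n m A (i - 1) = real_of_int b / real n - (x + real m / real n) + of_int (- t)"
      using bx t unfolding x0_def by simp
    then have "ZZ A (i - 1) = \<gamma> (real_of_int b / real n - (x + real m / real n) + of_int (- t))"
      by simp
    also have "\<dots> = \<gamma> (real_of_int b / real n - (x + real m / real n))" by (rule gshift) simp
    also have "\<dots> = c * cnj (\<gamma> (x + real m / real n))" using c by simp
    finally show ?thesis .
  qed
  have Zi: "ZZ A i = c * cnj (\<gamma> x)"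
  proof -
    have "ZZ A i = \<gamma> x" using hx by simp
    also have "\<dots> = \<gamma> (real_of_int b / real n - x)" by (simp add: bx)
    also have "\<dots> = c * cnj (\<gamma> x)" using c by simp
    finally show ?thesis .
  qed
  define u where "u = \<gamma> (x + real m / real n) - \<gamma> x"
  have d1: "ZZ A (i + 1) - ZZ A i = u" unfolding u_def Zp hx ..
  have d2: "ZZ A (i - 1) - ZZ A i = c * cnj u" unfolding u_def Zm Zi by (simp add: algebra_simps)
  note nc
  then have nn: "norm (c * cnj u) = norm u" by (simp add: norm_mult)
  have eqv: "(c * cnj u) / of_real (norm (c * cnj u)) + u / of_real (norm u)
        = c * cnj (u / of_real (norm u)) + u / of_real (norm u)"
    unfolding nn by simp
  show "inner ((ZZ A (i - 1) - ZZ A i) / of_real (norm (ZZ A (i - 1) - ZZ A i))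
             + (ZZ A (i + 1) - ZZ A i) / of_real (norm (ZZ A (i + 1) - ZZ A i)))
              (vector_derivative \<gamma> (at x)) = 0"
    unfolding d1 d2 vd eqv by (rule inner_alg[OF T])
qed

lemma sl_diff: "sym_lift n m A i - sym_lift n m A' j = real_of_int (A - A' + 2 * int m * (i - j)) / real (2 * n)"
  unfolding sym_lift_def using npos by (simp add: field_simps)

lemma ZZ_eq_iff: "ZZ A i = ZZ A' j \<longleftrightarrow> int (2 * n) dvd (A - A' + 2 * int m * (i - j))"
proof -
  have "ZZ A i = ZZ A' j \<longleftrightarrow> sym_lift n m A i - sym_lift n m A' j \<in> \<int>" using geq by simp
  also have "\<dots> \<longleftrightarrow> int (2 * n) dvd (A - A' + 2 * int m * (i - j))"
  proof -
    have n2: "2 * n > 0" using npos by simp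
    show ?thesis unfolding sl_diff by (intro iffI) (erule Ints_dvd[OF _ n2], erule dvd_Ints[OF _ n2])
  qed
  finally show ?thesis .
qed

lemma geom_ZZ: "geom_equal (ZZ A) (ZZ A') \<longleftrightarrow>
   (\<exists>j::int. \<forall>i. sym_lift n m A i - sym_lift n m A' i = real_of_int j / real n)"
proof
  assume "geom_equal (ZZ A) (ZZ A')"
  then obtain k where "(\<forall>i. ZZ A i = ZZ A' (k + i)) \<or> (\<forall>i. ZZ A i = ZZ A' (k - i))"
    unfolding geom_equal_def by blast
  then have "ZZ A 0 = ZZ A' k" by (elim disjE) (drule spec[of _ 0], simp)+
  then have "int (2 * n) dvd (A - A' + 2 * int m * (0 - k))" by (simp only: ZZ_eq_iff)
  then have "2 dvd (A - A' + 2 * int m * (0 - k))"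
    by (rule dvd_trans[rotated]) simp
  moreover have "(2::int) dvd 2 * int m * (0 - k)" by (rule dvd_mult2) simp
  ultimately have "2 dvd (A - A' + 2 * int m * (0 - k)) - 2 * int m * (0 - k)" by (rule dvd_diff)
  then have "2 dvd (A - A')" by simp
  then obtain j where j: "A - A' = 2 * j" by (rule dvdE)
  have "\<forall>i. sym_lift n m A i - sym_lift n m A' i = real_of_int j / real n"
  proof
    fix i
    have "real_of_int (A - A' + 2 * int m * (i - i)) / real (2 * n) = real_of_int j / real n"
      unfolding j using npos by simp
    then show "sym_lift n m A i - sym_lift n m A' i = real_of_int j / real n" by (simp only: sl_diff)
  qed
  then show "\<exists>j::int. \<forall>i. sym_lift n m A i - sym_lift n m A' i = real_of_int j / real n" ..
next
  assume "\<exists>j::int. \<forall>i. sym_lift n m A i - sym_lift n m A' i = real_of_int j / real n"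
  then obtain j :: int where "sym_lift n m A 0 - sym_lift n m A' 0 = real_of_int j / real n" by blast
  then have E: "real_of_int (A - A') / real (2 * n) = real_of_int j / real n"
    unfolding sl_diff[of A 0 A' 0] by simp
  have "real_of_int (A - A') = real_of_int (A - A') / real (2 * n) * real (2 * n)" using npos by simp
  also have "\<dots> = real_of_int j / real n * real (2 * n)" by (simp only: E)
  also have "\<dots> = real_of_int (2 * j)" using npos by simp
  finally have j: "A - A' = 2 * j" by (simp only: of_int_eq_iff)
  obtain k where k: "int n dvd (int m * k - j)" using cong_sol[OF cop] by blast
  have "\<forall>i. ZZ A i = ZZ A' (k + i)"
  proof
    fix i
    have eqN: "A - A' + 2 * int m * (i - (k + i)) = 2 * (- (int m * k - j))" unfolding j by (simp add: algebra_simps)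
    have "int n dvd (- (int m * k - j))" using k by (simp only: dvd_minus_iff)
    then have "2 * int n dvd 2 * (- (int m * k - j))" by (rule mult_dvd_mono[OF dvd_refl])
    then have dN: "int (2 * n) dvd 2 * (- (int m * k - j))" by simp
    show "ZZ A i = ZZ A' (k + i)" unfolding ZZ_eq_iff eqN by (rule dN)
  qed
  then show "geom_equal (ZZ A) (ZZ A')" unfolding geom_equal_def by blast
qed

lemma sym_ZZ: "Dn_symmetric n (ZZ A)"
  unfolding Dn_symmetric_def
proof
  fix g assume "g \<in> dihedral n"
  from dihedral_char[OF this] obtain a :: int where
    "(\<forall>x. g (\<gamma> x) = \<gamma> (x + a / n)) \<or> (\<forall>x. g (\<gamma> x) = \<gamma> (a / n - x))" by blast
  then show "\<exists>k::int. (\<forall>i. g (ZZ A i) = ZZ A (k + i)) \<or> (\<forall>i. g (ZZ A i) = ZZ A (k - i))"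
  proof
    assume h: "\<forall>x. g (\<gamma> x) = \<gamma> (x + a / n)"
    obtain k where k: "int n dvd (int m * k - a)" using cong_sol[OF cop] by blast
    have "\<forall>i. g (ZZ A i) = ZZ A (k + i)"
    proof
      fix i
      have "sym_lift n m A (k + i) - (sym_lift n m A i + a / n) = real_of_int (int m * k - a) / real n"
        unfolding sym_lift_def using npos by (simp add: field_simps)
      then have "sym_lift n m A (k + i) - (sym_lift n m A i + a / n) \<in> \<int>"
        using dvd_Ints[OF k npos] by simp
      then have "sym_lift n m A i + a / n - sym_lift n m A (k + i) \<in> \<int>" by (metis minus_diff_eq Ints_minus)
      then show "g (ZZ A i) = ZZ A (k + i)" using h geq by simp
    qed
    then show ?thesis by blast
  next
    assume h: "\<forall>x. g (\<gamma> x) = \<gamma> (a / n - x)"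
    obtain k where k: "int n dvd (int m * k - (a - A))" using cong_sol[OF cop] by blast
    have "\<forall>i. g (ZZ A i) = ZZ A (k - i)"
    proof
      fix i
      have "sym_lift n m A (k - i) - (a / n - sym_lift n m A i) = real_of_int (int m * k - (a - A)) / real n"
        unfolding sym_lift_def using npos by (simp add: field_simps)
      then have "sym_lift n m A (k - i) - (a / n - sym_lift n m A i) \<in> \<int>"
        using dvd_Ints[OF k npos] by simp
      then have "a / n - sym_lift n m A i - sym_lift n m A (k - i) \<in> \<int>" by (metis minus_diff_eq Ints_minus)
      then show "g (ZZ A i) = ZZ A (k - i)" using h geq by simp
    qed
    then show ?thesis by blast
  qed
qed

lemma lift_Int: "is_lift \<gamma> Z X \<Longrightarrow> Z a = Z b \<Longrightarrow> X a - X b \<in> \<int>"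
  unfolding is_lift_def using geq by metis

lemma lift_d: "is_lift \<gamma> Z X \<Longrightarrow> 0 < X (i + 1) - X i \<and> X (i + 1) - X i < 1"
  unfolding is_lift_def by blast

lemma stepA:
  assumes X: "is_lift \<gamma> Z X" and per: "periodic_seq n Z"
    and lim: "(\<lambda>k::nat. X (int k) / real k) \<longlonglongrightarrow> real m / real n"
  shows "X (i + int n) = X i + real m"
proof -
  define f where "f i = X (i + int n) - X i" for i
  have fI: "f i \<in> \<int>" for i
    unfolding f_def by (rule lift_Int[OF X]) (use per in \<open>simp add: periodic_seq_def\<close>)
  have "\<bar>f (i + 1) - f i\<bar> < 1" for i
  proof -
    have "f (i + 1) - f i = (X (i + int n + 1) - X (i + int n)) - (X (i + 1) - X i)"
      unfolding f_def by (simp add: algebra_simps)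
    then show ?thesis using lift_d[OF X, of i] lift_d[OF X, of "i + int n"] by (simp add: abs_less_iff)
  qed
  then have fc: "f i = f 0" for i using Ints_step_const[of f] fI by blast
  define p where "p = f 0"
  have Xk: "X (int (k * n)) = X 0 + real k * p" for k
  proof (induct k)
    case 0 then show ?case by simp
  next
    case (Suc k)
    have "X (int (Suc k * n)) = X (int (k * n) + int n)" by (simp add: algebra_simps)
    also have "\<dots> = X (int (k * n)) + p" using fc[of "int (k * n)"] unfolding f_def p_def by simp
    finally show ?case using Suc by (simp add: algebra_simps)
  qed
  have sm: "strict_mono (\<lambda>k. Suc k * n)"
    by (rule strict_monoI) (use npos in simp)
  from LIMSEQ_subseq_LIMSEQ[OF lim sm]
  have L1: "(\<lambda>k. X (int (Suc k * n)) / real (Suc k * n)) \<longlonglongrightarrow> real m / real n"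
    by (simp add: comp_def)
  have e: "X (int (Suc k * n)) / real (Suc k * n) = (X 0 / real n) / real (Suc k) + p / real n" for k
  proof -
    have nz: "real (Suc k) \<noteq> 0" "real n \<noteq> 0" using npos by auto
    have "X (int (Suc k * n)) / real (Suc k * n) = (X 0 + real (Suc k) * p) / (real (Suc k) * real n)"
      by (simp only: Xk) (simp only: of_nat_mult)
    also have "\<dots> = (X 0 / real n) / real (Suc k) + p / real n"
      using nz by (simp add: add_divide_distrib)
    finally show ?thesis .
  qed
  have "(\<lambda>k. (X 0 / real n) / real (Suc k) + p / real n) \<longlonglongrightarrow> 0 + p / real n"
    by (intro tendsto_add LIMSEQ_Suc[OF lim_const_over_n] tendsto_const)
  then have L2: "(\<lambda>k. X (int (Suc k * n)) / real (Suc k * n)) \<longlonglongrightarrow> p / real n"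
    unfolding e by simp
  have "p / real n = real m / real n" using LIMSEQ_unique[OF L2 L1] .
  then have "p = real m" using npos by simp
  then show ?thesis using fc[of i] unfolding f_def p_def by simp
qed

lemma Int_between: fixes x a :: real shows "x \<in> \<int> \<Longrightarrow> a < x \<Longrightarrow> x < a + 2 \<Longrightarrow> a \<in> \<int> \<Longrightarrow> x = a + 1"
proof -
  assume "x \<in> \<int>" "a < x" "x < a + 2" "a \<in> \<int>"
  then obtain zx za where zx: "x = of_int zx" and za: "a = of_int za" by (auto elim!: Ints_cases)
  with \<open>a < x\<close> \<open>x < a + 2\<close> have "za < zx" "zx < za + 2" by auto
  then have "zx = za + 1" by linarith
  then show "x = a + 1" using zx za by simp
qed

lemma rot_in: "rotR n \<in> dihedral n"
  using dihedral.dih_R[OF dihedral.dih_id, of n] by simp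

lemma refl_in: "reflS \<in> dihedral n"
  using dihedral.dih_S[OF dihedral.dih_id, of n] by simp

lemma rot_case1:
  assumes X: "is_lift \<gamma> Z X" and per: "periodic_seq n Z"
    and lim: "(\<lambda>k::nat. X (int k) / real k) \<longlonglongrightarrow> real m / real n"
    and k: "\<forall>i. rotR n (Z i) = Z (k + i)"
  shows "X i = X 0 + real_of_int i * (real m / real n)"
proof -
  have sA: "X (i + int n) = X i + real m" for i by (rule stepA[OF X per lim])
  have ZX: "Z i = \<gamma> (X i)" for i using X unfolding is_lift_def by simp
  define f where "f i = X (k + i) - X i - 1 / real n" for i
  have fI: "f i \<in> \<int>" for i
  proof -
    have "\<gamma> (X (k + i)) = \<gamma> (X i + 1 / real n)" using k ZX grot by metis
    then show ?thesis unfolding f_def geq by (simp add: algebra_simps)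
  qed
  have "\<bar>f (i + 1) - f i\<bar> < 1" for i
  proof -
    have "f (i + 1) - f i = (X (k + i + 1) - X (k + i)) - (X (i + 1) - X i)"
      unfolding f_def by (simp add: algebra_simps)
    then show ?thesis using lift_d[OF X, of i] lift_d[OF X, of "k + i"] by (simp add: abs_less_iff)
  qed
  then have fc: "f i = f 0" for i using Ints_step_const[of f] fI by blast
  obtain cc where cc: "f 0 = of_int cc" using fI[of 0] by (auto elim: Ints_cases)
  have Xk: "X (k + i) = X i + (1 / real n + of_int cc)" for i using fc[of i] cc unfolding f_def by simp
  define d where "d i = X (i + 1) - X i" for i
  have dk: "d (i + k) = d i" for i
    unfolding d_def using Xk[of i] Xk[of "i + 1"] by (simp add: algebra_simps)
  have dn: "d (i + int n) = d i" for i
    unfolding d_def using sA[of i] sA[of "i + 1"] by (simp add: algebra_simps)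
  define e where "e j = X (j * k) - real_of_int j * (1 / real n + of_int cc)" for j
  have "e (j + 1) = e j" for j
    unfolding e_def using Xk[of "j * k"] by (simp add: algebra_simps add_divide_distrib)
  then have "e (int n) = e 0" by (rule int_const_step)
  then have e1: "X (int n * k) = X 0 + 1 + real n * of_int cc"
    unfolding e_def using npos by (simp add: algebra_simps)
  define h where "h i = X i - real_of_int i * (real m / real n)" for i
  have "h (i + int n) = h i" for i
    unfolding h_def using sA[of i] npos by (simp add: field_simps)
  then have "h (0 + k * int n) = h 0" by (rule int_period_mult)
  then have e2: "X (int n * k) = X 0 + real_of_int k * real m"
    unfolding h_def using npos by (simp add: algebra_simps)
  have "real_of_int (int m * k) = real_of_int (1 + int n * cc)" using e1 e2 by (simp add: algebra_simps)
  then have bz: "int m * k + (- cc) * int n = 1" by (simp only: of_int_eq_iff) simp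
  have "d (i + 1) = d i" for i
  proof -
    have "d (i + int m * k + (- cc) * int n) = d (i + int m * k)" by (rule int_period_mult) (rule dn)
    also have "\<dots> = d i" by (rule int_period_mult) (rule dk)
    finally have "d (i + (int m * k + (- cc) * int n)) = d i" by (simp only: add.assoc)
    then show ?thesis unfolding bz .
  qed
  then have dc: "d i = d 0" for i by (rule int_const_step)
  define q where "q i = X i - real_of_int i * d 0" for i
  have "q (i + 1) = q i" for i unfolding q_def using dc[of i] unfolding d_def by (simp add: algebra_simps)
  then have qc: "q i = q 0" for i by (rule int_const_step)
  have "X (int n) = X 0 + real m" using sA[of 0] by simp
  then have "real n * d 0 = real m" using qc[of "int n"] unfolding q_def by simp
  then have "d 0 = real m / real n" using npos by (simp add: field_simps)
  then show ?thesis using qc[of i] unfolding q_def by simp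
qed

lemma rot_case2:
  assumes X: "is_lift \<gamma> Z X" and per: "periodic_seq n Z"
    and lim: "(\<lambda>k::nat. X (int k) / real k) \<longlonglongrightarrow> real m / real n"
    and k: "\<forall>i. rotR n (Z i) = Z (k - i)"
  shows "\<forall>i. rotR n (Z i) = Z (k + i)"
proof -
  have sA: "X (i + int n) = X i + real m" for i by (rule stepA[OF X per lim])
  have ZX: "Z i = \<gamma> (X i)" for i using X unfolding is_lift_def by simp
  define f where "f i = X (k - i) - X i - 1 / real n" for i
  have fI: "f i \<in> \<int>" for i
  proof -
    have "\<gamma> (X (k - i)) = \<gamma> (X i + 1 / real n)" using k ZX grot by metis
    then show ?thesis unfolding f_def geq by (simp add: algebra_simps)
  qed
  have fr: "f i = f (i + 1) + 1" for i
  proof -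
    have e: "f i - 2 < f (i + 1)" "f (i + 1) < f i"
      unfolding f_def using lift_d[OF X, of i] lift_d[OF X, of "k - i - 1"] by (simp_all add: algebra_simps)
    from Int_between[OF fI[of i], of "f (i + 1)"] e fI[of "i+1"]
    show ?thesis by simp
  qed
  have st: "f (i + 1) + real_of_int (i + 1) = f i + real_of_int i" for i using fr[of i] by simp
  have "f i + real_of_int i = f 0 + real_of_int 0" for i
    by (rule int_const_step[where f="\<lambda>i. f i + real_of_int i"]) (rule st)
  from this[of "int n"] have fn: "f (int n) = f 0 - real n" by simp
  have "X (k - int n) = X k - real m" using sA[of "k - int n"] by simp
  moreover have "X (int n) = X 0 + real m" using sA[of 0] by simp
  ultimately have "f (int n) = f 0 - 2 * real m" unfolding f_def by simp
  with fn have "real n = 2 * real m" by simp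
  then have n2: "n = 2 * m" by linarith
  then have "coprime m m" using cop by simp
  then have "m = 1" by simp
  with n2 have n2': "n = 2" by simp
  show ?thesis
  proof
    fix i
    have "Z (k - i + i * int n) = Z (k - i)"
      by (rule int_period_mult) (use per in \<open>simp add: periodic_seq_def\<close>)
    then have "Z (k + i) = Z (k - i)" using n2' by (simp add: algebra_simps)
    then show "rotR n (Z i) = Z (k + i)" using k by simp
  qed
qed

lemma sym_imp:
  assumes per: "periodic_seq n Z" and rot: "has_rotation_number \<gamma> Z (real m / real n)"
    and sym: "Dn_symmetric n Z"
  shows "\<exists>A. is_lift \<gamma> Z (sym_lift n m A)"
proof -
  obtain X where X: "is_lift \<gamma> Z X" and lim: "(\<lambda>k::nat. X (int k) / real k) \<longlonglongrightarrow> real m / real n"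
    using rot unfolding has_rotation_number_def by blast
  have ZX: "Z i = \<gamma> (X i)" for i using X unfolding is_lift_def by simp
  obtain k where "(\<forall>i. rotR n (Z i) = Z (k + i)) \<or> (\<forall>i. rotR n (Z i) = Z (k - i))"
    using sym rot_in unfolding Dn_symmetric_def by blast
  then have "\<forall>i. rotR n (Z i) = Z (k + i)" using rot_case2[OF X per lim] by blast
  from rot_case1[OF X per lim this] have Xi: "X i = X 0 + real_of_int i * (real m / real n)" for i .
  obtain k' where "(\<forall>i. reflS (Z i) = Z (k' + i)) \<or> (\<forall>i. reflS (Z i) = Z (k' - i))"
    using sym refl_in unfolding Dn_symmetric_def by blast
  then have "reflS (Z 0) = Z k'" by (elim disjE) (drule spec[of _ 0], simp)+
  then have "\<gamma> (- X 0) = \<gamma> (X k')" unfolding ZX grefl reflS_def .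
  then have "- X 0 - X k' \<in> \<int>" by (simp only: geq)
  then obtain z where z: "- X 0 - X k' = of_int z" by (auto elim!: Ints_cases)
  define A where "A = - (z * int n + k' * int m)"
  have X0: "X 0 = real_of_int A / (2 * real n)"
    using z Xi[of k'] npos unfolding A_def by (simp add: field_simps)
  have "sym_lift n m A i = X i" for i unfolding sym_lift_def X0 Xi[of i] by simp
  then have "is_lift \<gamma> Z (sym_lift n m A)" using X unfolding is_lift_def by simp
  then show ?thesis ..
qed

lemma sl_add: "sym_lift n m A (i + k) = sym_lift n m A i + real m / real n * real_of_int k"
  unfolding sym_lift_def by (simp add: algebra_simps add_divide_distrib)

lemma lift_ZZ: "is_lift \<gamma> (ZZ A) (sym_lift n m A)"
  unfolding is_lift_def sl_step using mpos mlt by simp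

lemma per_ZZ: "periodic_seq n (ZZ A)"
  unfolding periodic_seq_def
proof
  fix i
  have "sym_lift n m A (i + int n) - sym_lift n m A i = real m" unfolding sl_add using npos by simp
  then show "ZZ A (i + int n) = ZZ A i" unfolding geq by simp
qed

lemma rot_ZZ: "has_rotation_number \<gamma> (ZZ A) (real m / real n)"
  unfolding has_rotation_number_def
proof -
  have e: "sym_lift n m A (int (Suc k)) / real (Suc k)
      = (real_of_int A / (2 * real n)) / real (Suc k) + real m / real n" for k
  proof -
    have nz: "real (Suc k) \<noteq> 0" by simp
    show ?thesis unfolding sym_lift_def using nz by (simp add: add_divide_distrib)
  qed
  have "(\<lambda>k. (real_of_int A / (2 * real n)) / real (Suc k) + real m / real n) \<longlonglongrightarrow> 0 + real m / real n"
    by (intro tendsto_add LIMSEQ_Suc[OF lim_const_over_n] tendsto_const)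
  then have "(\<lambda>k. sym_lift n m A (int (Suc k)) / real (Suc k)) \<longlonglongrightarrow> real m / real n"
    unfolding e by simp
  then have "(\<lambda>k::nat. sym_lift n m A (int k) / real k) \<longlonglongrightarrow> real m / real n"
    by (rule filterlim_sequentially_Suc[THEN iffD1])
  then show "\<exists>X. is_lift \<gamma> (ZZ A) X \<and> (\<lambda>k::nat. X (int k) / real k) \<longlonglongrightarrow> real m / real n"
    using lift_ZZ by blast
qed

lemma birk_ZZ: "birkhoff \<gamma> (ZZ A)"
proof -
  have "\<forall>i j l k :: int. sym_lift n m A i \<le> sym_lift n m A j + l \<longrightarrow>
      sym_lift n m A (i + k) \<le> sym_lift n m A (j + k) + l"
    unfolding sl_add by simp
  then show ?thesis unfolding birkhoff_def using lift_ZZ by blast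
qed

end

theorem mainTheorem15:
  fixes m n :: nat and \<gamma> :: "real \<Rightarrow> complex"
  assumes "coprime m n" and "1 \<le> m" and "m \<le> n - 1"
    and "Dn_billiard_param n \<gamma>"
  shows
    "(\<forall>Z. billiard_seq \<gamma> Z \<and> periodic_seq n Z \<and> has_rotation_number \<gamma> Z (real m / real n)
        \<longrightarrow> (Dn_symmetric n Z \<longleftrightarrow> (\<exists>A::int. is_lift \<gamma> Z (sym_lift n m A))))
     \<and> (\<forall>A::int. billiard_orbit \<gamma> (\<lambda>i. \<gamma> (sym_lift n m A i)))
     \<and> (\<forall>A A' :: int. geom_equal (\<lambda>i. \<gamma> (sym_lift n m A i)) (\<lambda>i. \<gamma> (sym_lift n m A' i))
          \<longleftrightarrow> (\<exists>j::int. \<forall>i. sym_lift n m A i - sym_lift n m A' i = real_of_int j / real n))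
     \<and> (let Orb = {Z. billiard_orbit \<gamma> Z \<and> periodic_seq n Z \<and>
                    has_rotation_number \<gamma> Z (real m / real n) \<and>
                    Dn_symmetric n Z \<and> birkhoff \<gamma> Z}
        in \<exists>Z1\<in>Orb. \<exists>Z2\<in>Orb. \<not> geom_equal Z1 Z2 \<and>
             (\<forall>Z\<in>Orb. geom_equal Z Z1 \<or> geom_equal Z Z2))"
proof -
  interpret DBm n \<gamma> m
    by unfold_locales (use assms in auto)
  have liftZ: "is_lift \<gamma> Z (sym_lift n m A) \<Longrightarrow> Z = ZZ A" for Z A
    unfolding is_lift_def by auto
  have P1: "\<forall>Z. billiard_seq \<gamma> Z \<and> periodic_seq n Z \<and> has_rotation_number \<gamma> Z (real m / real n)
        \<longrightarrow> (Dn_symmetric n Z \<longleftrightarrow> (\<exists>A::int. is_lift \<gamma> Z (sym_lift n m A)))"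
  proof (intro allI impI iffI)
    fix Z assume "billiard_seq \<gamma> Z \<and> periodic_seq n Z \<and> has_rotation_number \<gamma> Z (real m / real n)"
      "Dn_symmetric n Z"
    then show "\<exists>A::int. is_lift \<gamma> Z (sym_lift n m A)" using sym_imp by blast
  next
    fix Z assume "\<exists>A::int. is_lift \<gamma> Z (sym_lift n m A)"
    then obtain A where "is_lift \<gamma> Z (sym_lift n m A)" by blast
    then have "Z = ZZ A" by (rule liftZ)
    then show "Dn_symmetric n Z" using sym_ZZ by simp
  qed
  define Orb where "Orb = {Z. billiard_orbit \<gamma> Z \<and> periodic_seq n Z \<and>
                    has_rotation_number \<gamma> Z (real m / real n) \<and>
                    Dn_symmetric n Z \<and> birkhoff \<gamma> Z}"
  have inO: "ZZ A \<in> Orb" for A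
    unfolding Orb_def using orbit_ZZ per_ZZ rot_ZZ sym_ZZ birk_ZZ by blast
  have ne: "\<not> geom_equal (ZZ 0) (ZZ 1)"
  proof
    assume "geom_equal (ZZ 0) (ZZ 1)"
    then obtain j :: int where "\<forall>i. sym_lift n m 0 i - sym_lift n m 1 i = real_of_int j / real n"
      unfolding geom_ZZ by blast
    then have "sym_lift n m 0 0 - sym_lift n m 1 0 = real_of_int j / real n" by blast
    then have "- 1 / (2 * real n) = real_of_int j / real n" unfolding sym_lift_def by simp
    then have "real_of_int (- 1) = real_of_int (2 * j)" using npos by (simp add: field_simps)
    then have "- 1 = 2 * j" by (simp only: of_int_eq_iff)
    then show False by presburger
  qed
  have cover: "geom_equal Z (ZZ 0) \<or> geom_equal Z (ZZ 1)" if "Z \<in> Orb" for Z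
  proof -
    from that have "periodic_seq n Z" "has_rotation_number \<gamma> Z (real m / real n)" "Dn_symmetric n Z"
      unfolding Orb_def by auto
    then obtain A where "is_lift \<gamma> Z (sym_lift n m A)" using sym_imp by blast
    then have Z: "Z = ZZ A" by (rule liftZ)
    obtain t r where tr: "A = 2 * t + r" "r = 0 \<or> r = 1" by (metis add.commute add.right_neutral mod_mult_div_eq odd_iff_mod_2_eq_one mod2_eq_if)
    have "\<forall>i. sym_lift n m A i - sym_lift n m r i = real_of_int t / real n"
    proof
      fix i
      show "sym_lift n m A i - sym_lift n m r i = real_of_int t / real n"
        unfolding sym_lift_def tr(1) using npos by (simp add: field_simps)
    qed
    then have "geom_equal (ZZ A) (ZZ r)" unfolding geom_ZZ by blast
    then show ?thesis using Z tr(2) by auto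
  qed
  have P4: "\<exists>Z1\<in>Orb. \<exists>Z2\<in>Orb. \<not> geom_equal Z1 Z2 \<and> (\<forall>Z\<in>Orb. geom_equal Z Z1 \<or> geom_equal Z Z2)"
    using inO ne cover by blast
  show ?thesis
    unfolding Let_def Orb_def[symmetric]
    using P1 orbit_ZZ geom_ZZ P4 by blast
qed

end
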